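(* Let $\alpha\in\{2,3,\ldots\}$, $n\in\mathbb{N}$ and $r\in\mathbb{Z}$, and set $n_*=\lfloor n/2^{\alpha-2}\rfloor$, $r_*=\lfloor r/2^{\alpha-2}\rfloor$. Then $$2^{-\left\lfloor\frac{n-2^{\alpha-1}}{\varphi(2^{\alpha})}\right\rfloor}\sum_{k\equiv r\ (\mathrm{mod}\ 2^{\alpha})}\binom nk\equiv1\pmod 2$$ if and only if $\binom{\{n\}_{2^{\alpha-2}}}{\{r\}_{2^{\alpha-2}}}$ is odd and one of the following holds: (a) $n_*>2$ and $n_*\not\equiv2r_*+2\pmod 4$; (b) $n_*=2$ and $2\mid r_*$.
   Context: $\varphi$ is Euler's totient function. $\{a\}_m$ denotes the least nonnegative residue of the integer $a$ modulo the positive integer $m$. The sum runs over all integers $k\equiv r\pmod{2^\alpha}$ with $\binom nk=0$ unless $0\le k\le n$; the left side is an integer (possibly multiplied by a nonnegative power of $2$ when the floor is negative). *)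

theory Defs
  imports Complex_Main "HOL-Number_Theory.Number_Theory"
begin

end

theory Submission
  imports Defs "HOL-Computational_Algebra.Polynomial"
begin

lemma choose_double_mod2:
  "((2*a) choose i) mod 2 = (if even i then (a choose (i div 2)) mod 2 else 0)"
proof (induction a arbitrary: i)
  case 0
  then show ?case by (cases i) auto
next
  case (Suc a)
  show ?case
  proof (cases i)
    case 0 then show ?thesis by simp
  next
    case (Suc i1)
    show ?thesis
    proof (cases i1)
      case 0 with Suc show ?thesis by simp
    next
      case (Suc i2)
      have e: "2 * Suc a = Suc (Suc (2*a))" by simp
      have ii: "i = Suc (Suc i2)" using \<open>i = Suc i1\<close> Suc by simp
      have "(2 * Suc a choose i) = (Suc (Suc (2*a)) choose Suc (Suc i2))" by (simp only: e ii)
      also have "\<dots> = (2*a choose i2) + 2 * (2*a choose Suc i2) + (2*a choose Suc (Suc i2))"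
        by (simp only: binomial_Suc_Suc)
      finally have "(2 * Suc a choose i) = (2*a choose i2) + 2 * (2*a choose Suc i2) + (2*a choose Suc (Suc i2))" .
      hence "(2 * Suc a choose i) mod 2 = ((2*a choose i2) + (2*a choose Suc (Suc i2)) + 2 * (2*a choose Suc i2)) mod 2"
        by (simp only: ac_simps)
      also have "\<dots> = ((2*a choose i2) + (2*a choose Suc (Suc i2))) mod 2"
        by (rule mod_mult_self2)
      also have "\<dots> = ((2*a choose i2) mod 2 + (2*a choose Suc (Suc i2)) mod 2) mod 2"
        by (rule mod_add_eq[symmetric])
      also have "\<dots> = (if even i then (Suc a choose (i div 2)) mod 2 else 0)"
      proof (cases "even i2")
        case True
        then obtain t where t: "i2 = 2*t" by blast
        have "Suc (Suc i2) div 2 = Suc t" using t by simp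
        then show ?thesis using Suc.IH[of i2] Suc.IH[of "Suc (Suc i2)"] t \<open>i = Suc i1\<close> \<open>i1 = Suc i2\<close>
          by (simp add: mod_add_eq)
      next
        case False
        then show ?thesis using Suc.IH[of i2] Suc.IH[of "Suc (Suc i2)"] \<open>i = Suc i1\<close> \<open>i1 = Suc i2\<close>
          by simp
      qed
      finally show ?thesis .
    qed
  qed
qed

lemma choose_pow2_mod2:
  "((2^j*a) choose i) mod 2 = (if 2^j dvd i then (a choose (i div 2^j)) mod 2 else 0)"
proof (induction j arbitrary: i)
  case 0 then show ?case by simp
next
  case (Suc j)
  have "((2^Suc j*a) choose i) mod 2 = ((2*(2^j*a)) choose i) mod 2" by (simp add: mult.assoc)
  also have "\<dots> = (if even i then ((2^j*a) choose (i div 2)) mod 2 else 0)"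
    by (rule choose_double_mod2)
  also have "\<dots> = (if 2^Suc j dvd i then (a choose (i div 2^Suc j)) mod 2 else 0)"
  proof (cases "even i")
    case True
    then obtain t where t: "i = 2*t" by blast
    have "2^Suc j dvd i \<longleftrightarrow> 2^j dvd t" using t by simp
    moreover have "i div 2^Suc j = t div 2^j" using t by (simp add: div_mult2_eq)
    ultimately show ?thesis using Suc.IH[of t] t by simp
  next
    case False
    hence "\<not> 2^Suc j dvd i" by (metis dvd_power dvd_trans zero_less_Suc)
    then show ?thesis using False by simp
  qed
  finally show ?case .
qed

lemma lucas2:
  assumes q: "q = 2^j" and b: "b < q" and d: "d < q"
  shows "((q*a+b) choose (q*c+d)) mod 2 = ((a choose c)*(b choose d)) mod 2"
proof -
  let ?k = "q*c+d"
  have "((q*a+b) choose ?k) = (\<Sum>i\<le>?k. ((q*a) choose i) * (b choose (?k - i)))"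
    by (rule vandermonde[symmetric])
  hence "((q*a+b) choose ?k) mod 2 = (\<Sum>i\<le>?k. ((q*a) choose i) * (b choose (?k - i))) mod 2"
    by simp
  also have "\<dots> = (\<Sum>i\<le>?k. (((q*a) choose i) * (b choose (?k - i))) mod 2) mod 2"
    by (rule mod_sum_eq[symmetric])
  also have "\<dots> = (\<Sum>i\<le>?k. ((((q*a) choose i) mod 2) * (b choose (?k - i))) mod 2) mod 2"
    by (simp only: mod_mult_left_eq)
  also have "\<dots> = (\<Sum>i\<le>?k. (((q*a) choose i) mod 2) * (b choose (?k - i))) mod 2"
    by (rule mod_sum_eq)
  also have "(\<Sum>i\<le>?k. (((q*a) choose i) mod 2) * (b choose (?k - i)))
      = (\<Sum>i\<le>?k. if i = q*c then ((a choose c) mod 2) * (b choose d) else 0)"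
  proof (rule sum.cong[OF refl])
    fix i assume i: "i \<in> {..?k}"
    show "(((q*a) choose i) mod 2) * (b choose (?k - i)) = (if i = q*c then ((a choose c) mod 2) * (b choose d) else 0)"
    proof (cases "q dvd i")
      case True
      then obtain t where t: "i = q*t" by blast
      have qpos: "q > 0" using b by simp
      have tc: "t \<le> c"
      proof (rule ccontr)
        assume "\<not> t \<le> c" hence "c+1 \<le> t" by simp
        hence "q*(c+1) \<le> q*t" by (rule mult_le_mono2)
        thus False using i t d by (simp add: algebra_simps)
      qed
      show ?thesis
      proof (cases "t = c")
        case True then show ?thesis using t q qpos choose_pow2_mod2[of j a i] by simp
      next
        case False
        hence "t < c" using tc by simp
        hence "t+1 \<le> c" by simp
        hence "q*(t+1) \<le> q*c" by (rule mult_le_mono2)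
        hence "?k - i \<ge> q" using t by (simp add: algebra_simps)
        hence "b choose (?k - i) = 0" using b by simp
        moreover have "i \<noteq> q*c" using t False qpos by simp
        ultimately show ?thesis by simp
      qed
    next
      case False
      hence "i \<noteq> q*c" by auto
      then show ?thesis using False q choose_pow2_mod2[of j a i] by simp
    qed
  qed
  also have "\<dots> = ((a choose c) mod 2) * (b choose d)" by simp
  finally show ?thesis by (simp add: mod_mult_left_eq)
qed

lemma powK:
  assumes "a \<ge> 1"
  shows "\<exists>G::int poly. [:1,1:]^(2^a) = 1 + monom 1 (2^(a-1)) * monom 1 (2^(a-1))
            + 2 * monom 1 (2^(a-1)) + 4 * G"
  using assms
proof (induction a rule: dec_induct)
  case base
  have "[:1,1:] = (1::int poly) + monom 1 1" by (simp add: monom_Suc one_pCons)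
  hence "[:1,1:]^(2^1) = (1 + monom 1 1 * monom 1 1 + 2 * monom 1 1 :: int poly)"
    by (simp add: power2_eq_square algebra_simps)
  then show ?case by (intro exI[of _ 0]) simp
next
  case (step a)
  then obtain G where G: "[:1,1:]^(2^a) = 1 + monom 1 (2^(a-1)) * monom 1 (2^(a-1))
            + 2 * monom 1 (2^(a-1)) + 4 * (G::int poly)" by blast
  define Y :: "int poly" where "Y = monom 1 (2^(a-1))"
  have YY: "Y * Y = monom 1 (2^(Suc a - 1))" using step(1)
  proof -
    have "(2::nat)^(a-1) + 2^(a-1) = 2^(Suc a - 1)" using step(1) by (cases a) auto
    thus ?thesis by (simp add: Y_def mult_monom)
  qed
  have "[:1,1:]^(2^Suc a) = ([:1,1:]^(2^a))^2" by (simp add: power_mult[symmetric] mult.commute)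
  also have "\<dots> = (1 + Y*Y + 2*Y + 4*G)^2" using G by (simp add: Y_def)
  also have "\<dots> = 1 + (Y*Y)*(Y*Y) + 2*(Y*Y) + 4*(Y + Y*Y + Y*Y*Y + 2*G*(1+Y)*(1+Y) + 4*G*G)"
    unfolding power2_eq_square by (simp add: algebra_simps)
  finally show ?case unfolding YY by blast
qed

definition Lf :: "nat \<Rightarrow> int \<Rightarrow> nat \<Rightarrow> int poly \<Rightarrow> nat \<Rightarrow> int" where
  "Lf N c h A r = (\<Sum>k<N. if k mod h = r then c^(k div h) * coeff A k else 0)"

definition LL :: "int \<Rightarrow> nat \<Rightarrow> int poly \<Rightarrow> nat \<Rightarrow> int" where
  "LL c h A r = Lf (Suc (degree A)) c h A r"

lemma Lf_mono: assumes "degree A < N" "N \<le> N'" shows "Lf N' c h A r = Lf N c h A r"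
  using assms(2)
proof (induction N' rule: dec_induct)
  case base then show ?case by simp
next
  case (step N')
  have "coeff A N' = 0" using step assms(1) by (intro coeff_eq_0) simp
  then show ?case using step by (simp add: Lf_def)
qed

lemma Lf_LL: "degree A < N \<Longrightarrow> Lf N c h A r = LL c h A r"
  unfolding LL_def by (rule Lf_mono) auto

lemma Lf_add: "Lf N c h (A + B) r = Lf N c h A r + Lf N c h B r"
  unfolding Lf_def by (simp add: sum.distrib[symmetric] algebra_simps) (rule sum.cong, auto simp: algebra_simps)

lemma Lf_smult: "Lf N c h (smult e A) r = e * Lf N c h A r"
  unfolding Lf_def by (simp add: sum_distrib_left) (rule sum.cong, auto simp: algebra_simps)

lemma LL_add: "LL c h (A + B) r = LL c h A r + LL c h B r"
proof -
  define N where "N = Suc (degree A + degree B)"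
  have "degree (A+B) < N" unfolding N_def using degree_add_le_max[of A B] by linarith
  moreover have "degree A < N" "degree B < N" unfolding N_def by auto
  ultimately show ?thesis using Lf_add[of N c h A B r] by (simp add: Lf_LL)
qed

lemma LL_smult: "LL c h (smult e A) r = e * LL c h A r"
proof -
  define N where "N = Suc (degree A)"
  have "degree (smult e A) < N" unfolding N_def using degree_smult_le[of e A] by linarith
  moreover have "degree A < N" unfolding N_def by auto
  ultimately show ?thesis using Lf_smult[of N c h e A r] by (simp add: Lf_LL)
qed

lemma Lf_monom_mult:
  assumes "s \<le> N"
  shows "Lf N c h (monom 1 s * R) r
     = (\<Sum>i<N-s. if (i+s) mod h = r then c^((i+s) div h) * coeff R i else 0)"
proof -
  let ?f = "\<lambda>k. if k mod h = r then c^(k div h) * coeff (monom 1 s * R) k else 0"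
  have "Lf N c h (monom 1 s * R) r = sum ?f {0..<N}" unfolding Lf_def by (simp add: lessThan_atLeast0)
  also have "\<dots> = sum ?f {0..<s} + sum ?f {s..<N}"
    using assms by (simp add: sum.atLeastLessThan_concat)
  also have "sum ?f {0..<s} = 0" by (rule sum.neutral) (auto simp: coeff_monom_mult)
  also have "sum ?f {s..<N} = sum ?f {0+s..<(N-s)+s}" using assms by simp
  also have "\<dots> = (\<Sum>i\<in>{0..<N-s}. ?f (i+s))" by (rule sum.shift_bounds_nat_ivl)
  also have "\<dots> = (\<Sum>i<N-s. if (i+s) mod h = r then c^((i+s) div h) * coeff R i else 0)"
    by (simp add: lessThan_atLeast0 coeff_monom_mult cong: if_cong)
  finally show ?thesis by simp
qed

lemma Lf_kill:
  assumes h: "h > 0" and N: "degree U + h < N"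
  shows "Lf N c h ((monom 1 h - [:c:]) * U) r = 0"
proof -
  have e: "(monom 1 h - [:c:]) * U = monom 1 h * U + smult (-c) U"
    by (simp add: algebra_simps)
  have "Lf N c h (monom 1 h * U) r
     = (\<Sum>i<N-h. if (i+h) mod h = r then c^((i+h) div h) * coeff U i else 0)"
    using N by (intro Lf_monom_mult) simp
  also have "\<dots> = c * Lf (N-h) c h U r"
    unfolding Lf_def using h by (simp add: sum_distrib_left) (rule sum.cong, auto)
  also have "Lf (N-h) c h U r = Lf N c h U r"
    using N by (intro Lf_mono[symmetric]) auto
  finally show ?thesis unfolding e Lf_add Lf_smult by simp
qed

lemma LL_ideal:
  assumes h: "h > 0" and A: "A = (monom 1 h - [:c:]) * U + smult e W"
  shows "LL c h A r = e * LL c h W r"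
proof -
  define N where "N = Suc (degree A + degree U + degree W + h)"
  have dU: "degree U + h < N" unfolding N_def by simp
  have k: "Lf N c h ((monom 1 h - [:c:]) * U) r = 0" using Lf_kill[OF h dU] .
  have "LL c h A r = Lf N c h A r" by (rule Lf_LL[symmetric]) (simp add: N_def)
  also have "\<dots> = Lf N c h ((monom 1 h - [:c:]) * U) r + e * Lf N c h W r"
    unfolding A Lf_add Lf_smult ..
  also have "Lf N c h W r = LL c h W r" by (rule Lf_LL) (simp add: N_def)
  finally show ?thesis using k by simp
qed

lemma LL_sign_mod2: "2 dvd (LL (-1) h A r - LL 1 h A r)"
proof -
  have "LL (-1) h A r - LL 1 h A r = (\<Sum>k<Suc (degree A). if k mod h = r then ((-1)^(k div h) - 1) * coeff A k else 0)"
    unfolding LL_def Lf_def sum_subtractf[symmetric] by (rule sum.cong) (auto simp: algebra_simps)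
  also have "2 dvd \<dots>"
  proof (rule dvd_sum)
    fix k
    have "2 dvd ((-1::int)^(k div h) - 1)" by (cases "even (k div h)") auto
    then show "2 dvd (if k mod h = r then ((-1)^(k div h) - 1) * coeff A k else 0)" by auto
  qed
  finally show ?thesis .
qed

lemma LL_extract:
  assumes h: "h > 0" and R: "degree R < h" and j: "j < h" and js: "(j + s) mod h = r"
  shows "LL 1 h (monom 1 s * R) r = coeff R j"
proof -
  have "degree (monom 1 s * R) < s + h"
    using degree_mult_le[of "monom 1 s" R] R by (simp add: degree_monom_eq) 
  hence "LL 1 h (monom 1 s * R) r = Lf (s+h) 1 h (monom 1 s * R) r" by (simp add: Lf_LL)
  also have "\<dots> = (\<Sum>i<h. if (i+s) mod h = r then coeff R i else 0)"
    by (subst Lf_monom_mult) (simp_all cong: if_cong)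
  also have "\<dots> = (\<Sum>i<h. if i = j then coeff R j else 0)"
  proof (rule sum.cong[OF refl])
    fix i assume i: "i \<in> {..<h}"
    have "(i+s) mod h = r \<longleftrightarrow> i = j"
    proof
      assume "(i+s) mod h = r"
      hence "(i+s) mod h = (j+s) mod h" using js by simp
      hence "[i + s = j + s] (mod h)" by (simp add: cong_def)
      hence "[i = j] (mod h)" by (simp add: cong_add_rcancel_nat)
      thus "i = j" using i j by (simp add: cong_def)
    next
      assume "i = j" thus "(i+s) mod h = r" using js by simp
    qed
    thus "(if (i+s) mod h = r then coeff R i else 0) = (if i = j then coeff R j else 0)" by auto
  qed
  also have "\<dots> = coeff R j" using j by simp
  finally show ?thesis .
qed

lemma coeff_11_power: "coeff ([:1,1:]^n :: int poly) k = int (n choose k)"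
proof (cases "k \<le> n")
  case True then show ?thesis using coeff_linear_poly_power[of k n "1::int" 1] by simp
next
  case False
  hence "coeff ([:1,1:]^n :: int poly) k = 0" by (intro coeff_eq_0) (simp add: degree_linear_power)
  then show ?thesis using False by simp
qed

lemma LL_ideal':
  assumes h: "h > 0" and A: "A = (monom 1 h - [:c:]) * U + of_int e * W"
  shows "LL c h A r = e * LL c h W r"
  using LL_ideal[OF h, of A c U e W] A by (simp add: of_int_poly)

lemma LL_mult_const: "LL c h (of_int e * W) r = e * LL c h W r"
  using LL_smult[of c h e W r] by (simp add: of_int_poly)

lemma GL: "\<exists>U. (Z + 2 * B)^m = 2^m * B^m + Z * (U :: 'a::comm_ring_1)"
proof (induction m)
  case 0 then show ?case by (intro exI[of _ 0]) simp
next
  case (Suc m)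
  then obtain U where U: "(Z + 2 * B)^m = 2^m * B^m + Z * U" by blast
  have "(Z + 2 * B)^Suc m = (2^m * B^m + Z * U) * (Z + 2 * B)" using U by simp
  also have "\<dots> = 2^Suc m * B^Suc m + Z * (2^m * B^m + U * Z + 2 * U * B)"
    by (simp add: algebra_simps)
  finally show ?case by blast
qed

lemma pow_plus2: "\<exists>H. (Y + 2 * G)^m = Y^m + 2 * (H :: 'a::comm_ring_1)"
proof (induction m)
  case 0 then show ?case by (intro exI[of _ 0]) simp
next
  case (Suc m)
  then obtain H where H: "(Y + 2 * G)^m = Y^m + 2 * H" by blast
  have "(Y + 2 * G)^Suc m = (Y^m + 2 * H) * (Y + 2 * G)" using H by simp
  also have "\<dots> = Y^Suc m + 2 * (H * Y + Y^m * G + 2 * H * G)"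
    by (simp add: algebra_simps)
  finally show ?case by blast
qed

lemma powK':
  assumes a: "a \<ge> 1" and h: "h = 2^a" and q: "q = 2^(a-1)"
  shows "\<exists>G::int poly. [:1,1:]^h = 1 + monom 1 h + 2 * monom 1 q + 4 * G
      \<and> monom 1 q * monom 1 q = (monom 1 h :: int poly)"
proof -
  obtain G where G: "[:1,1:]^(2^a) = 1 + monom 1 (2^(a-1)) * monom 1 (2^(a-1))
            + 2 * monom 1 (2^(a-1)) + 4 * (G::int poly)" using powK[OF a] by blast
  have "(2::nat)^(a-1) + 2^(a-1) = 2^a" using a by (cases a) auto
  hence YY: "monom 1 q * monom 1 q = (monom 1 h :: int poly)" unfolding h q by (simp add: mult_monom)
  show ?thesis using G YY unfolding h q by auto
qed

lemma neg_part:
  fixes h q :: nat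
  assumes a: "a \<ge> 1" and h: "h = 2^a" and q: "q = 2^(a-1)" and n': "n' < h" and j: "j < h"
    and jr: "(j + q*m) mod h = r"
  shows "\<exists>t. LL (-1) h ([:1,1:]^(m*h + n')) r = 2^m * (int (n' choose j) + 2*t)"
proof -
  obtain G where G: "[:1,1:]^h = 1 + monom 1 h + 2 * monom 1 q + 4 * (G :: int poly)"
    using powK'[OF a h q] by blast
  define Z :: "int poly" where "Z = monom 1 h + 1"
  define B where "B = monom 1 q + 2 * G"
  have P: "[:1,1:]^h = Z + 2 * B" unfolding Z_def B_def G by (simp add: algebra_simps)
  obtain U where U: "([:1,1:]^h)^m = 2^m * B^m + Z * U" unfolding P using GL by blast
  obtain H where H: "B^m = monom 1 (q*m) + 2 * H"
    unfolding B_def using pow_plus2[of "monom 1 q" G m] by (auto simp: monom_power)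
  define R :: "int poly" where "R = [:1,1:]^n'"
  have "[:1,1:]^(m*h + n') = ([:1,1:]^h)^m * R"
    unfolding R_def by (simp add: power_add power_mult mult.commute)
  also have "\<dots> = (monom 1 h - [:-1:]) * (U * R) + of_int (2^m) * (monom 1 (q*m) * R + 2 * (H * R))"
    unfolding U H Z_def by (simp add: algebra_simps one_pCons)
  finally have E: "[:1,1:]^(m*h + n') = (monom 1 h - [:-1:]) * (U * R) + of_int (2^m) * (monom 1 (q*m) * R + 2 * (H * R))" .
  have hpos: "h > 0" using h by simp
  have "LL (-1) h ([:1,1:]^(m*h + n')) r = 2^m * LL (-1) h (monom 1 (q*m) * R + 2 * (H * R)) r"
    by (rule LL_ideal'[OF hpos E])
  also have "\<dots> = 2^m * (LL (-1) h (monom 1 (q*m) * R) r + 2 * LL (-1) h (H * R) r)"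
    using LL_mult_const[of "-1" h 2 "H * R" r] by (simp add: LL_add)
  finally have E2: "LL (-1) h ([:1,1:]^(m*h + n')) r = 2^m * (LL (-1) h (monom 1 (q*m) * R) r + 2 * LL (-1) h (H * R) r)" .
  have dR: "degree R < h" unfolding R_def using n' by (simp add: degree_linear_power)
  have ex: "LL 1 h (monom 1 (q*m) * R) r = int (n' choose j)"
    using LL_extract[OF hpos dR j jr] unfolding R_def by (simp add: coeff_11_power)
  obtain t1 where t1: "LL (-1) h (monom 1 (q*m) * R) r - LL 1 h (monom 1 (q*m) * R) r = 2 * t1"
    using LL_sign_mod2 by blast
  have X: "LL (-1) h (monom 1 (q*m) * R) r = int (n' choose j) + 2*t1" using t1 ex by simp
  show ?thesis unfolding E2 X by (intro exI[of _ "t1 + LL (-1) h (H * R) r"]) (simp add: algebra_simps)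
qed

lemma pos_part:
  fixes h q :: nat
  assumes a: "a \<ge> 1" and h: "h = 2^a" and q: "q = 2^(a-1)" and m: "m \<ge> 2"
  shows "\<exists>t. LL 1 h ([:1,1:]^(m*h + n')) r = 2^(m+1) * t"
proof -
  obtain G where G: "[:1,1:]^h = 1 + monom 1 h + 2 * monom 1 q + 4 * (G :: int poly)"
      and YY: "monom 1 q * monom 1 q = (monom 1 h :: int poly)"
    using powK'[OF a h q] by blast
  define Z :: "int poly" where "Z = monom 1 h - 1"
  define Y :: "int poly" where "Y = monom 1 q"
  define C0 where "C0 = 1 + Y + 2 * G"
  have P: "[:1,1:]^h = Z + 2 * C0" unfolding Z_def C0_def G Y_def by (simp add: algebra_simps)
  define C1 where "C1 = 1 + Y + 2 * (G * (1 + Y) + G * G)"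
  have C0sq: "C0^2 = Z + 2 * C1"
  proof -
    have "C0^2 = Y * Y - 1 + 2 * C1" unfolding C0_def C1_def power2_eq_square
      by (simp add: algebra_simps)
    thus ?thesis unfolding Y_def YY Z_def .
  qed
  obtain U where U: "([:1,1:]^h)^m = 2^m * C0^m + Z * U" unfolding P using GL by blast
  have Cm: "C0^m = C0^2 * C0^(m-2)"
  proof -
    have "m = 2 + (m-2)" using m by simp
    hence "C0^m = C0^(2 + (m-2))" by (rule arg_cong)
    thus ?thesis by (simp only: power_add)
  qed
  define R :: "int poly" where "R = [:1,1:]^n'"
  have "[:1,1:]^(m*h + n') = ([:1,1:]^h)^m * R"
    unfolding R_def by (simp add: power_add power_mult mult.commute)
  also have "\<dots> = (monom 1 h - [:1:]) * (U * R + 2^m * (C0^(m-2) * R)) + of_int (2^(m+1)) * (C1 * C0^(m-2) * R)"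
    unfolding U Cm C0sq Z_def by (simp add: algebra_simps one_pCons)
  finally have E: "[:1,1:]^(m*h + n') = (monom 1 h - [:1:]) * (U * R + 2^m * (C0^(m-2) * R)) + of_int (2^(m+1)) * (C1 * C0^(m-2) * R)" .
  have hpos: "h > 0" using h by simp
  show ?thesis using LL_ideal'[OF hpos E] by blast
qed

lemma split_term:
  fixes h k \<rho> :: nat and x :: int
  assumes h: "h > 0" and \<rho>: "\<rho> < 2*h"
  shows "2 * (if k mod (2*h) = \<rho> then x else 0) =
     (if k mod h = \<rho> mod h then 1^(k div h) * x else 0)
     + (if \<rho> < h then 1 else -1) * (if k mod h = \<rho> mod h then (-1)^(k div h) * x else 0)"
proof -
  have km: "k mod (2*h) = h * (k div h mod 2) + k mod h"
    using mod_mult2_eq[of k h 2] by (simp add: mult.commute)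
  have rm: "\<rho> = h * (\<rho> div h) + \<rho> mod h" by simp
  have rd: "\<rho> div h < 2" using \<rho> h by (simp add: div_less_iff_less_mult mult.commute)
  show ?thesis
  proof (cases "k mod h = \<rho> mod h")
    case False
    hence "k mod (2*h) \<noteq> \<rho>"
      by (metis mod_mod_cancel dvd_triv_right mult.commute)
    then show ?thesis using False by simp
  next
    case True
    have km2: "k mod (2*h) = h*(k div h mod 2) + \<rho> mod h" using km True by simp
    have "k mod (2*h) = \<rho> \<longleftrightarrow> h*(k div h mod 2) = h*(\<rho> div h)"
    proof
      assume "k mod (2*h) = \<rho>"
      thus "h*(k div h mod 2) = h*(\<rho> div h)" using km2 rm by linarith
    next
      assume "h*(k div h mod 2) = h*(\<rho> div h)"
      thus "k mod (2*h) = \<rho>" using km2 rm by linarith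
    qed
    hence eq: "k mod (2*h) = \<rho> \<longleftrightarrow> k div h mod 2 = \<rho> div h" using h by simp
    show ?thesis
    proof (cases "\<rho> < h")
      case True2: True
      hence "\<rho> div h = 0" by simp
      then show ?thesis using True True2 eq by (cases "even (k div h)") (auto simp: even_iff_mod_2_eq_zero odd_iff_mod_2_eq_one)
    next
      case False2: False
      have "1 \<le> \<rho> div h" using div_le_mono[of h \<rho> h] False2 h by simp
      hence "\<rho> div h = 1" using rd by linarith
      then show ?thesis using True False2 eq by (cases "even (k div h)") (auto simp: even_iff_mod_2_eq_zero odd_iff_mod_2_eq_one)
    qed
  qed
qed

lemma S_LL:
  fixes h \<rho> n :: nat
  assumes h: "h > 0" and \<rho>: "\<rho> < 2*h"
  shows "2 * int (\<Sum>k\<in>{k\<in>{0..n}. k mod (2*h) = \<rho>}. n choose k)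
     = LL 1 h ([:1,1:]^n) (\<rho> mod h) + (if \<rho> < h then 1 else -1) * LL (-1) h ([:1,1:]^n) (\<rho> mod h)"
proof -
  have "int (\<Sum>k\<in>{k\<in>{0..n}. k mod (2*h) = \<rho>}. n choose k)
      = (\<Sum>k<Suc n. if k mod (2*h) = \<rho> then int (n choose k) else 0)"
  proof -
    have "int (\<Sum>k\<in>{k\<in>{0..n}. k mod (2*h) = \<rho>}. n choose k) = (\<Sum>k\<in>{k\<in>{0..n}. k mod (2*h) = \<rho>}. int (n choose k))"
      by (rule of_nat_sum)
    also have "\<dots> = (\<Sum>k\<in>{0..n}. if k mod (2*h) = \<rho> then int (n choose k) else 0)"
      by (rule sum.inter_filter) simp
    also have "\<dots> = (\<Sum>k<Suc n. if k mod (2*h) = \<rho> then int (n choose k) else 0)"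
      by (rule sum.cong) auto
    finally show ?thesis .
  qed
  hence "2 * int (\<Sum>k\<in>{k\<in>{0..n}. k mod (2*h) = \<rho>}. n choose k)
      = (\<Sum>k<Suc n. 2 * (if k mod (2*h) = \<rho> then int (n choose k) else 0))"
    by (simp add: sum_distrib_left)
  also have "\<dots> = (\<Sum>k<Suc n. (if k mod h = \<rho> mod h then 1^(k div h) * int (n choose k) else 0)
     + (if \<rho> < h then 1 else -1) * (if k mod h = \<rho> mod h then (-1)^(k div h) * int (n choose k) else 0))"
    by (rule sum.cong[OF refl], rule split_term[OF h \<rho>])
  also have "\<dots> = (\<Sum>k<Suc n. if k mod h = \<rho> mod h then 1^(k div h) * int (n choose k) else 0)
     + (if \<rho> < h then 1 else -1) * (\<Sum>k<Suc n. if k mod h = \<rho> mod h then (-1)^(k div h) * int (n choose k) else 0)"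
    by (simp only: sum.distrib sum_distrib_left[symmetric])
  also have "\<dots> = LL 1 h ([:1,1:]^n) (\<rho> mod h) + (if \<rho> < h then 1 else -1) * LL (-1) h ([:1,1:]^n) (\<rho> mod h)"
    unfolding LL_def Lf_def degree_linear_power coeff_11_power ..
  finally show ?thesis .
qed

lemma modlem:
  fixes S t t' C :: int and m :: nat and \<sigma> :: int
  assumes m: "m \<ge> 1" and \<sigma>: "\<sigma> = 1 \<or> \<sigma> = -1"
    and E: "2*S = 2^(m+1)*t + \<sigma>*2^m*(C + 2*t')"
  shows "S mod 2^m = 2^(m-1) \<longleftrightarrow> odd C"
proof -
  define P :: int where "P = 2^(m-1)"
  have P2: "2^m = 2*P" unfolding P_def using m by (cases m) auto
  have P4: "2^(m+1) = 4*P" unfolding P_def using m by (cases m) auto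
  have Ppos: "P > 0" unfolding P_def by simp
  have S: "S = 2*P*t + \<sigma>*P*(C + 2*t')" using E unfolding P2 P4 by (simp add: algebra_simps)
  show ?thesis
  proof (cases "odd C")
    case True
    then obtain c where c: "C = 2*c+1" by (metis oddE)
    have "S = 2*P*(t + \<sigma>*t' + \<sigma>*c + (if \<sigma> = 1 then 0 else -1)) + P"
      using \<sigma> unfolding S c by (auto simp: algebra_simps)
    hence "S mod (2*P) = P mod (2*P)" by (metis mod_mult_self3 mult.commute add.commute)
    also have "\<dots> = P" using Ppos by simp
    finally show ?thesis using True P2 P_def by simp
  next
    case False
    then obtain c where c: "C = 2*c" by (metis evenE)
    have "S = 2*P*(t + \<sigma>*t' + \<sigma>*c)" unfolding S c by (simp add: algebra_simps)
    hence "S mod (2*P) = 0" by simp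
    then show ?thesis using False P2 P_def Ppos by simp
  qed
qed

lemma lhs_iff:
  fixes S m :: nat
  shows "(\<exists>z::int. odd z \<and> of_int z = (2::real) powi (- (int m - 1)) * real S)
     \<longleftrightarrow> (m \<ge> 1 \<and> int S mod 2^m = 2^(m-1))"
proof (cases "m = 0")
  case True
  have "\<not> (odd z \<and> of_int z = (2::real) powi (- (int m - 1)) * real S)" for z
  proof
    assume A: "odd z \<and> of_int z = (2::real) powi (- (int m - 1)) * real S"
    hence "real_of_int z = real_of_int (2 * int S)" using True by simp
    hence "z = 2 * int S" by (simp only: of_int_eq_iff)
    thus False using A by simp
  qed
  then show ?thesis using True by auto
next
  case False
  define P :: int where "P = 2^(m-1)"
  have Ppos: "P > 0" unfolding P_def by simp
  have P2: "2^m = 2*P" unfolding P_def using False by (cases m) auto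
  have e1: "- (int m - 1) = - int (m-1)" using False by simp
  have pw: "(2::real) powi (- (int m - 1)) = 1 / real_of_int P"
    unfolding e1 P_def by (simp add: power_int_minus divide_inverse)
  have key: "of_int z = (2::real) powi (- (int m - 1)) * real S \<longleftrightarrow> int S = z * P" for z
  proof -
    have "of_int z = (2::real) powi (- (int m - 1)) * real S \<longleftrightarrow> real_of_int z * real_of_int P = real S"
      unfolding pw using Ppos by (auto simp: field_simps)
    also have "\<dots> \<longleftrightarrow> real_of_int (z * P) = real_of_int (int S)" by simp
    also have "\<dots> \<longleftrightarrow> int S = z * P" by (simp only: of_int_eq_iff eq_commute)
    finally show ?thesis .
  qed
  have "(\<exists>z::int. odd z \<and> int S = z * P) \<longleftrightarrow> int S mod (2*P) = P"
  proof
    assume "\<exists>z. odd z \<and> int S = z * P"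
    then obtain z where z: "odd z" "int S = z * P" by blast
    then obtain c where c: "z = 2*c+1" by (metis oddE)
    have "int S = P + c * (2*P)" using z c by (simp add: algebra_simps)
    hence "int S mod (2*P) = P mod (2*P)" by simp
    thus "int S mod (2*P) = P" using Ppos by simp
  next
    assume A: "int S mod (2*P) = P"
    have "int S = (int S div (2*P)) * (2*P) + int S mod (2*P)" by (rule div_mult_mod_eq[symmetric])
    hence "int S = (2 * (int S div (2*P)) + 1) * P" using A by (simp add: algebra_simps)
    thus "\<exists>z. odd z \<and> int S = z * P" by (intro exI[of _ "2 * (int S div (2*P)) + 1"]) simp
  qed
  thus ?thesis using key False P2 P_def by simp
qed

lemma S_small:
  fixes n M \<rho> :: nat
  assumes "n < M"
  shows "(\<Sum>k\<in>{k\<in>{0..n}. k mod M = \<rho>}. n choose k) = n choose \<rho>"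
proof -
  have A: "k mod M = k" if "k \<in> {0..n}" for k using assms that by simp
  have B: "{k\<in>{0..n}. k mod M = \<rho>} = {k\<in>{0..n}. k = \<rho>}"
  proof (rule Collect_cong)
    fix k show "(k \<in> {0..n} \<and> k mod M = \<rho>) \<longleftrightarrow> (k \<in> {0..n} \<and> k = \<rho>)" using A[of k] by auto
  qed
  show ?thesis
  proof (cases "\<rho> \<le> n")
    case True
    hence "{k\<in>{0..n}. k = \<rho>} = {\<rho>}" by auto
    then show ?thesis unfolding B by simp
  next
    case False
    hence "{k\<in>{0..n}. k = \<rho>} = {}" by auto
    moreover have "n choose \<rho> = 0" using False by simp
    ultimately show ?thesis unfolding B by (simp only: sum.empty)
  qed
qed

lemma choose2: "k \<le> 3 \<Longrightarrow> odd ((2::nat) choose k) \<longleftrightarrow> even k"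
  by (cases k; cases "k-1"; cases "k-2"; simp add: numeral_eq_Suc; presburger)
lemma choose3: "k \<le> 3 \<Longrightarrow> odd ((3::nat) choose k)"
  by (cases k; cases "k-1"; cases "k-2"; simp add: numeral_eq_Suc; presburger)
lemma choose01: "b \<le> 1 \<Longrightarrow> j \<le> 1 \<Longrightarrow> odd ((b::nat) choose j) \<longleftrightarrow> j \<le> b"
  by (cases b; cases j; simp)

lemma lucas_odd:
  assumes "q = 2^j" "b < q" "d < q"
  shows "odd ((q*a+b) choose (q*c+d)) \<longleftrightarrow> odd (a choose c) \<and> odd (b choose d)"
proof -
  have e: "((q*a+b) choose (q*c+d)) mod 2 = ((a choose c)*(b choose d)) mod 2" by (rule lucas2[OF assms])
  hence "even ((q*a+b) choose (q*c+d)) \<longleftrightarrow> even ((a choose c)*(b choose d))"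
    by (simp only: even_iff_mod_2_eq_zero)
  thus ?thesis by simp
qed

theorem corollary1p2:
  fixes \<alpha> n :: nat and r :: int
  assumes "\<alpha> \<ge> 2"
  shows "(\<exists>m::int. odd m \<and>
            of_int m = (2::real) powi (- \<lfloor>(real n - 2 ^ (\<alpha> - 1)) / real (totient (2 ^ \<alpha>))\<rfloor>)
                        * real (\<Sum>k\<in>{k\<in>{0..n}. [int k = r] (mod 2 ^ \<alpha>)}. n choose k))
     \<longleftrightarrow>
     (odd ((n mod 2 ^ (\<alpha> - 2)) choose nat (r mod 2 ^ (\<alpha> - 2))) \<and>
      ((n div 2 ^ (\<alpha> - 2) > 2 \<and>
          \<not> [int (n div 2 ^ (\<alpha> - 2)) = 2 * (r div 2 ^ (\<alpha> - 2)) + 2] (mod 4)) \<or>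
       (n div 2 ^ (\<alpha> - 2) = 2 \<and> 2 dvd (r div 2 ^ (\<alpha> - 2)))))"
proof -
  define a where "a = \<alpha> - 1"
  have a1: "a \<ge> 1" using assms unfolding a_def by simp
  define h :: nat where "h = 2^a"
  define q :: nat where "q = 2^(a-1)"
  have hq: "h = 2*q" unfolding h_def q_def using a1 by (cases a) auto
  have qpos: "q > 0" unfolding q_def by simp
  have hpos: "h > 0" using hq qpos by simp
  have e_al: "(2::nat)^\<alpha> = 2*h" unfolding h_def a_def using assms by (cases \<alpha>) auto
  have e_al1: "(2::nat)^(\<alpha>-1) = h" unfolding h_def a_def ..
  have aa: "a - 1 = \<alpha> - 2" unfolding a_def by simp
  have e_al2: "(2::nat)^(\<alpha>-2) = q" unfolding q_def aa ..
  have e_al2i: "(2::int)^(\<alpha>-2) = int q" using e_al2 by (metis of_nat_numeral of_nat_power)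
  have e_ali: "(2::int)^\<alpha> = int (2*h)" using e_al by (metis of_nat_numeral of_nat_power)
  have e_al1r: "(2::real)^(\<alpha>-1) = real h" using e_al1 by (metis of_nat_numeral of_nat_power)
  have tot: "totient (2^\<alpha>) = h"
    using totient_prime_power[of 2 \<alpha>] assms e_al1 by simp
  define m where "m = n div h"
  define n' where "n' = n mod h"
  have n_dec: "n = m*h + n'" unfolding m_def n'_def by simp
  have n'h: "n' < h" unfolding n'_def using hpos by simp
  have fl: "\<lfloor>(real n - 2 ^ (\<alpha> - 1)) / real (totient (2 ^ \<alpha>))\<rfloor> = int m - 1"
  proof -
    have "(real n - 2 ^ (\<alpha> - 1)) / real (totient (2 ^ \<alpha>)) = real n / real h - of_int 1"
      unfolding tot e_al1r using hpos by (simp add: field_simps)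
    hence "\<lfloor>(real n - 2 ^ (\<alpha> - 1)) / real (totient (2 ^ \<alpha>))\<rfloor> = \<lfloor>real n / real h\<rfloor> - 1"
      by (simp only: floor_diff_of_int)
    also have "\<lfloor>real n / real h\<rfloor> = int m" unfolding m_def by (rule floor_divide_of_nat_eq)
    finally show ?thesis .
  qed
  define \<rho> where "\<rho> = nat (r mod int (2*h))"
  have \<rho>lt: "\<rho> < 2*h" unfolding \<rho>_def using hpos
    by (simp add: nat_less_iff)
  have setEq: "{k\<in>{0..n}. [int k = r] (mod 2^\<alpha>)} = {k\<in>{0..n}. k mod (2*h) = \<rho>}"
  proof (rule Collect_cong)
    fix k
    have "[int k = r] (mod 2^\<alpha>) \<longleftrightarrow> int (k mod (2*h)) = r mod int (2*h)"
      unfolding e_ali cong_def by (simp add: of_nat_mod)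
    also have "\<dots> \<longleftrightarrow> k mod (2*h) = \<rho>"
    proof -
      have "r mod int (2*h) \<ge> 0" using hpos by simp
      thus ?thesis unfolding \<rho>_def by auto
    qed
    finally show "(k \<in> {0..n} \<and> [int k = r] (mod 2^\<alpha>)) \<longleftrightarrow> (k \<in> {0..n} \<and> k mod (2*h) = \<rho>)" by simp
  qed
  define S where "S = (\<Sum>k\<in>{k\<in>{0..n}. k mod (2*h) = \<rho>}. n choose k)"
  have LHS: "(\<exists>m::int. odd m \<and>
            of_int m = (2::real) powi (- \<lfloor>(real n - 2 ^ (\<alpha> - 1)) / real (totient (2 ^ \<alpha>))\<rfloor>)
                        * real (\<Sum>k\<in>{k\<in>{0..n}. [int k = r] (mod 2 ^ \<alpha>)}. n choose k))
     \<longleftrightarrow> (m \<ge> 1 \<and> int S mod 2^m = 2^(m-1))"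
    unfolding fl setEq S_def[symmetric] by (rule lhs_iff)
  define ns where "ns = n div q"
  define n0 where "n0 = n mod q"
  define rs where "rs = r div int q"
  define r0 where "r0 = nat (r mod int q)"
  have RHS: "(odd ((n mod 2 ^ (\<alpha> - 2)) choose nat (r mod 2 ^ (\<alpha> - 2))) \<and>
      ((n div 2 ^ (\<alpha> - 2) > 2 \<and>
          \<not> [int (n div 2 ^ (\<alpha> - 2)) = 2 * (r div 2 ^ (\<alpha> - 2)) + 2] (mod 4)) \<or>
       (n div 2 ^ (\<alpha> - 2) = 2 \<and> 2 dvd (r div 2 ^ (\<alpha> - 2)))))
     \<longleftrightarrow> (odd (n0 choose r0) \<and> ((ns > 2 \<and> \<not> [int ns = 2*rs+2] (mod 4)) \<or> (ns = 2 \<and> 2 dvd rs)))"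
    unfolding e_al2 e_al2i ns_def n0_def rs_def r0_def ..
  have n0q: "n0 < q" unfolding n0_def using qpos by simp
  have r0q: "r0 < q" unfolding r0_def using qpos by (simp add: nat_less_iff)
  have n_q: "n = q*ns + n0" unfolding ns_def n0_def by simp
  have m_ns: "m = ns div 2" unfolding m_def ns_def hq by (simp add: div_mult2_eq mult.commute)
  have n'_q: "n' = q*(ns mod 2) + n0" unfolding n'_def ns_def n0_def hq
    using mod_mult2_eq[of n q 2] by (simp add: mult.commute)
  have r_q: "r = int q * rs + r mod int q" unfolding rs_def by simp
  have \<rho>_q: "\<rho> = q * nat (rs mod 4) + r0"
  proof -
    have "r mod int (2*h) = int q * (rs mod 4) + r mod int q"
      unfolding hq rs_def using zmod_zmult2_eq[of 4 r "int q"] by (simp add: mult.commute)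
    moreover have "rs mod 4 \<ge> 0" "r mod int q \<ge> 0" using qpos by simp_all
    ultimately show ?thesis unfolding \<rho>_def r0_def
      by (simp add: nat_add_distrib nat_mult_distrib)
  qed
  have qj: "q = 2^(a-1)" by (rule q_def)
  show ?thesis
    unfolding LHS RHS
  proof (cases "m = 0")
    case True
    hence "ns < 2" using m_ns by simp
    then show "(m \<ge> 1 \<and> int S mod 2^m = 2^(m-1)) \<longleftrightarrow>
      (odd (n0 choose r0) \<and> ((ns > 2 \<and> \<not> [int ns = 2*rs+2] (mod 4)) \<or> (ns = 2 \<and> 2 dvd rs)))"
      using True by simp
  next
    case False
    show "(m \<ge> 1 \<and> int S mod 2^m = 2^(m-1)) \<longleftrightarrow>
      (odd (n0 choose r0) \<and> ((ns > 2 \<and> \<not> [int ns = 2*rs+2] (mod 4)) \<or> (ns = 2 \<and> 2 dvd rs)))"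
    proof (cases "m = 1")
      case m1: True
      have nlt: "n < 2*h" using m1 n_dec n'h by simp
      have S1: "S = n choose \<rho>" unfolding S_def by (rule S_small[OF nlt])
      have o: "int S mod 2 = 1 \<longleftrightarrow> odd (int S)" by (simp only: odd_iff_mod_2_eq_one)
      have "(m \<ge> 1 \<and> int S mod 2^m = 2^(m-1)) \<longleftrightarrow> odd S" using m1 o by simp
      also have "\<dots> \<longleftrightarrow> odd (ns choose nat (rs mod 4)) \<and> odd (n0 choose r0)"
        unfolding S1 n_q \<rho>_q using lucas_odd[OF qj n0q r0q] by simp
      also have "\<dots> \<longleftrightarrow> (odd (n0 choose r0) \<and> ((ns > 2 \<and> \<not> [int ns = 2*rs+2] (mod 4)) \<or> (ns = 2 \<and> 2 dvd rs)))"
      proof -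
        have ns23: "ns = 2 \<or> ns = 3" using m1 m_ns by presburger
        have le3: "nat (rs mod 4) \<le> 3" by simp
        show ?thesis
        proof (cases "ns = 2")
          case True
          have "even (nat (rs mod 4)) \<longleftrightarrow> even (rs mod 4)" by (rule even_nat_iff) simp
          also have "\<dots> \<longleftrightarrow> 2 dvd rs" by presburger
          finally have "even (nat (rs mod 4)) \<longleftrightarrow> 2 dvd rs" .
          then show ?thesis using True choose2[OF le3] by auto
        next
          case False
          hence "ns = 3" using ns23 by simp
          moreover have "\<not> [int 3 = 2*rs+2] (mod 4)" unfolding cong_def by presburger
          ultimately show ?thesis using choose3[OF le3] by simp
        qed
      qed
      finally show ?thesis .
    next
      case m1: False
      have m2: "m \<ge> 2" using False m1 by simp
      have ns4: "ns \<ge> 4" using m2 m_ns by simp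
      define A :: "int poly" where "A = [:1,1:]^n"
      define \<sigma> :: int where "\<sigma> = (if \<rho> < h then 1 else -1)"
      have SL: "2 * int S = LL 1 h A (\<rho> mod h) + \<sigma> * LL (-1) h A (\<rho> mod h)"
        unfolding S_def A_def \<sigma>_def by (rule S_LL[OF hpos \<rho>lt])
      obtain t where t: "LL 1 h A (\<rho> mod h) = 2^(m+1) * t"
        using pos_part[OF a1 h_def q_def m2, of n' "\<rho> mod h"] unfolding A_def n_dec by blast
      define js where "js = nat ((rs - int m) mod 2)"
      define j where "j = q*js + r0"
      have js1: "js \<le> 1" unfolding js_def by simp
      have "q*js \<le> q*1" using js1 by (rule mult_le_mono2)
      hence qjs: "q*js \<le> q" by (simp only: mult_1_right)
      have jh: "j < h" unfolding j_def hq using r0q qjs by linarith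
      have jr: "(j + q*m) mod h = \<rho> mod h"
      proof -
        define x where "x = rs - int m"
        have "int (j + q*m) = int q * (x mod 2) + r mod int q + int q * int m"
          unfolding j_def js_def r0_def x_def using qpos by simp
        also have "\<dots> = r + int h * (- (x div 2))"
        proof -
          have xx: "2*(x div 2) + x mod 2 = x" by (rule mult_div_mod_eq)
          have ri: "(qq::int) * e = qq * (2*d + e) - 2*qq*d" for qq e d by (simp add: algebra_simps)
          have "int q * (x mod 2) = int q * x - 2 * int q * (x div 2)"
            using ri[of "int q" "x mod 2" "x div 2"] unfolding xx .
          hence "int q * (x mod 2) + r mod int q + int q * int m = int q * rs + r mod int q - 2 * int q * (x div 2)"
            unfolding x_def by (simp add: algebra_simps)
          also have "\<dots> = r - 2 * int q * (x div 2)" using r_q by simp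
          finally show ?thesis unfolding hq by simp
        qed
        finally have X: "int (j + q*m) = r + int h * (- (x div 2))" .
        have "int (j + q*m) mod int h = r mod int h" unfolding X by (rule mod_mult_self2)
        moreover have "int \<rho> mod int h = r mod int h"
        proof -
          have "int \<rho> = r mod int (2*h)" unfolding \<rho>_def using hpos by simp
          thus ?thesis by (simp add: mod_mod_cancel)
        qed
        ultimately have "int ((j + q*m) mod h) = int (\<rho> mod h)" by (simp add: of_nat_mod)
        thus ?thesis by simp
      qed
      obtain t' where t': "LL (-1) h A (\<rho> mod h) = 2^m * (int (n' choose j) + 2*t')"
        using neg_part[OF a1 h_def q_def n'h jh jr] unfolding A_def n_dec by blast
      have m1': "m \<ge> 1" using m2 by simp
      have sig: "\<sigma> = 1 \<or> \<sigma> = -1" unfolding \<sigma>_def by simp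
      have E: "2 * int S = 2^(m+1)*t + \<sigma>*2^m*(int (n' choose j) + 2*t')"
        unfolding SL t t' by (simp only: mult.assoc)
      have "(int S mod 2^m = 2^(m-1)) \<longleftrightarrow> odd (int (n' choose j))"
        by (rule modlem[OF m1' sig E])
      also have "\<dots> \<longleftrightarrow> odd (n' choose j)" by simp
      also have "\<dots> \<longleftrightarrow> odd ((ns mod 2) choose js) \<and> odd (n0 choose r0)"
        unfolding n'_q j_def using lucas_odd[OF qj n0q r0q] by simp
      also have "\<dots> \<longleftrightarrow> js \<le> ns mod 2 \<and> odd (n0 choose r0)"
        using choose01[OF _ js1, of "ns mod 2"] by simp
      also have "js \<le> ns mod 2 \<longleftrightarrow> \<not> [int ns = 2*rs+2] (mod 4)"
      proof -
        define b where "b = ns mod 2"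
        have b1: "b \<le> 1" unfolding b_def by simp
        have nsn: "ns = 2 * m + b" unfolding b_def m_ns by (rule mult_div_mod_eq[symmetric])
        have nsb: "int ns = 2 * int m + int b" by (subst nsn) simp
        have jsi: "int js = (rs - int m) mod 2" unfolding js_def by simp
        have aux: "((rs - M) mod 2 \<le> B) \<longleftrightarrow> \<not> ((2*M + B) mod 4 = (2*rs+2) mod 4)"
          if "0 \<le> B" "B \<le> 1" for M B :: int using that by presburger
        have "js \<le> b \<longleftrightarrow> int js \<le> int b" by simp
        also have "\<dots> \<longleftrightarrow> \<not> ((2 * int m + int b) mod 4 = (2*rs+2) mod 4)"
          unfolding jsi by (rule aux) (use b1 in simp_all)
        finally show ?thesis unfolding cong_def nsb b_def .
      qed
      finally show ?thesis using m2 ns4 by auto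
    qed
  qed
qed


end
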